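(* For any path $\omega\in\Omega$ that is CH-random for a computable precise forecasting system $\varphi$: $\big[\liminf_{n\to\infty}\varphi(\omega_{1:n}),\ \limsup_{n\to\infty}\varphi(\omega_{1:n})\big]\subseteq I_\textnormal{CH}(\omega).$
   Context: $\mathcal{X}=\{0,1\}$; $\Omega=\mathcal{X}^{\mathbb{N}}$ (paths); $\mathbb{S}=\bigcup_{n\ge0}\mathcal X^n$ (situations), $\omega_{1:n}=(\omega_1,\dots,\omega_n)$, $\omega_{1:0}$ the empty string. $\mathcal{I}$: nonempty closed intervals $I\subseteq[0,1]$. A forecasting system is $\varphi:\mathbb S\to\mathcal I$, $\underline\varphi=\min\varphi$, $\overline\varphi=\max\varphi$; precise if $\underline\varphi=\overline\varphi$ (then $\varphi(s)$ is identified with the number $\underline\varphi(s)$); an interval forecast $I$ is identified with the constant forecasting system $s\mapsto I$. $\varphi$ is computable if there are recursive $\underline q,\overline q:\mathbb S\times\mathbb N_0\to\mathbb Q$ with $|\underline\varphi(s)-\underline q(s,n)|<2^{-n}$ and $|\overline\varphi(s)-\overline q(s,n)|<2^{-n}$. A path $\omega$ is CH-random for $\varphi$ if for every recursive selection process $S:\mathbb S\to\{0,1\}$ with $\sum_{k=0}^{n-1}S(\omega_{1:k})\to\infty$: $\liminf_n \frac{\sum_{k<n}S(\omega_{1:k})[\omega_{k+1}-\underline\varphi(\omega_{1:k})]}{\sum_{k<n}S(\omega_{1:k})}\ge0$ and $\limsup_n \frac{\sum_{k<n}S(\omega_{1:k})[\omega_{k+1}-\overline\varphi(\omega_{1:k})]}{\sum_{k<n}S(\omega_{1:k})}\le0$.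 $\mathcal I_\textnormal{CH}(\omega)=\{I\in\mathcal I:\omega\text{ CH-random for }I\}$, $I_\textnormal{CH}(\omega)=\bigcap_{I\in\mathcal I_\textnormal{CH}(\omega)}I$. *)

theory Defs
  imports Complex_Main "HOL-Library.Nat_Bijection" "HOL-Library.Extended_Real"
begin

datatype recf = Zero | Succ | Proj nat | Comp recf "recf list" | Prim recf recf | Mn recf

inductive eval_recf :: "recf \<Rightarrow> nat list \<Rightarrow> nat \<Rightarrow> bool" where
  zero: "eval_recf Zero xs 0"
| succ: "eval_recf Succ (x # xs) (Suc x)"
| proj: "i < length xs \<Longrightarrow> eval_recf (Proj i) xs (xs ! i)"
| comp: "list_all2 (\<lambda>g y. eval_recf g xs y) gs ys \<Longrightarrow> eval_recf f ys z
         \<Longrightarrow> eval_recf (Comp f gs) xs z"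
| prim0: "eval_recf f xs y \<Longrightarrow> eval_recf (Prim f g) (0 # xs) y"
| primS: "eval_recf (Prim f g) (n # xs) y \<Longrightarrow> eval_recf g (y # n # xs) z
          \<Longrightarrow> eval_recf (Prim f g) (Suc n # xs) z"
| mn: "eval_recf f (n # xs) 0 \<Longrightarrow> (\<forall>m<n. \<exists>y. y > 0 \<and> eval_recf f (m # xs) y)
       \<Longrightarrow> eval_recf (Mn f) xs n"

definition recursive_fun :: "(nat \<Rightarrow> nat) \<Rightarrow> bool" where
  "recursive_fun f \<longleftrightarrow> (\<exists>t. \<forall>n. eval_recf t [n] (f n))"

text \<open>Situations (finite binary strings) are bool lists (True = 1).\<close>
definition sit_encode :: "bool list \<Rightarrow> nat" where
  "sit_encode s = list_encode (map of_bool s)"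

definition rat_decode :: "nat \<Rightarrow> rat" where
  "rat_decode m = (case prod_decode m of (a, b) \<Rightarrow> of_int (int_decode a) / of_nat (Suc b))"

definition recursive_selection :: "(bool list \<Rightarrow> bool) \<Rightarrow> bool" where
  "recursive_selection S \<longleftrightarrow>
     (\<exists>g. recursive_fun g \<and> (\<forall>s. g (sit_encode s) = of_bool (S s)))"

definition recursive_rat_fun :: "(bool list \<Rightarrow> nat \<Rightarrow> rat) \<Rightarrow> bool" where
  "recursive_rat_fun q \<longleftrightarrow>
     (\<exists>g. recursive_fun g \<and> (\<forall>s n. q s n = rat_decode (g (prod_encode (sit_encode s, n)))))"

definition intervals :: "real set set" where
  "intervals = {I. \<exists>a b. 0 \<le> a \<and> a \<le> b \<and> b \<le> 1 \<and> I = {a..b}}"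

definition forecasting_system :: "(bool list \<Rightarrow> real set) \<Rightarrow> bool" where
  "forecasting_system \<phi> \<longleftrightarrow> (\<forall>s. \<phi> s \<in> intervals)"

definition lower :: "(bool list \<Rightarrow> real set) \<Rightarrow> bool list \<Rightarrow> real" where
  "lower \<phi> s = Inf (\<phi> s)"

definition upper :: "(bool list \<Rightarrow> real set) \<Rightarrow> bool list \<Rightarrow> real" where
  "upper \<phi> s = Sup (\<phi> s)"

definition precise :: "(bool list \<Rightarrow> real set) \<Rightarrow> bool" where
  "precise \<phi> \<longleftrightarrow> (\<forall>s. lower \<phi> s = upper \<phi> s)"

definition computable_fs :: "(bool list \<Rightarrow> real set) \<Rightarrow> bool" where
  "computable_fs \<phi> \<longleftrightarrow>
     (\<exists>ql qu. recursive_rat_fun ql \<and> recursive_rat_fun qu \<and>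
        (\<forall>s n. \<bar>lower \<phi> s - of_rat (ql s n)\<bar> < 1 / 2 ^ n \<and>
               \<bar>upper \<phi> s - of_rat (qu s n)\<bar> < 1 / 2 ^ n))"

text \<open>Paths are bool sequences; omega_{k+1} is \<open>\<omega> k\<close>; omega_{1:n} is \<open>prefix \<omega> n\<close>.\<close>
definition prefix :: "(nat \<Rightarrow> bool) \<Rightarrow> nat \<Rightarrow> bool list" where
  "prefix \<omega> n = map \<omega> [0..<n]"

definition CH_random :: "(bool list \<Rightarrow> real set) \<Rightarrow> (nat \<Rightarrow> bool) \<Rightarrow> bool" where
  "CH_random \<phi> \<omega> \<longleftrightarrow>
     (\<forall>S. recursive_selection S \<and>
          filterlim (\<lambda>n. \<Sum>k<n. of_bool (S (prefix \<omega> k)) :: real) at_top sequentially \<longrightarrow>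
        Liminf sequentially (\<lambda>n. ereal
          ((\<Sum>k<n. of_bool (S (prefix \<omega> k)) * (of_bool (\<omega> k) - lower \<phi> (prefix \<omega> k)))
           / (\<Sum>k<n. of_bool (S (prefix \<omega> k))))) \<ge> 0 \<and>
        Limsup sequentially (\<lambda>n. ereal
          ((\<Sum>k<n. of_bool (S (prefix \<omega> k)) * (of_bool (\<omega> k) - upper \<phi> (prefix \<omega> k)))
           / (\<Sum>k<n. of_bool (S (prefix \<omega> k))))) \<le> 0)"

definition I_CH :: "(nat \<Rightarrow> bool) \<Rightarrow> real set" where
  "I_CH \<omega> = \<Inter> {I \<in> intervals. CH_random (\<lambda>_. I) \<omega>}"

end

theory Submission
  imports Defs
begin


definition rf :: "nat \<Rightarrow> (nat list \<Rightarrow> nat) \<Rightarrow> bool" where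
  "rf k f \<longleftrightarrow> (\<exists>t. \<forall>xs. length xs = k \<longrightarrow> eval_recf t xs (f xs))"

lemma rf_cong: "rf k f \<Longrightarrow> (\<And>xs. length xs = k \<Longrightarrow> f xs = g xs) \<Longrightarrow> rf k g"
  unfolding rf_def by metis

lemma rf_zero: "rf k (\<lambda>_. 0)"
  unfolding rf_def by (auto intro: eval_recf.zero)

lemma rf_proj: "i < k \<Longrightarrow> rf k (\<lambda>xs. xs ! i)"
  unfolding rf_def by (auto intro: eval_recf.proj)

lemma rf_comp1: "rf 1 f \<Longrightarrow> rf k g \<Longrightarrow> rf k (\<lambda>xs. f [g xs])"
proof -
  assume "rf 1 f" "rf k g"
  then obtain tf tg where tf: "\<And>xs. length xs = 1 \<Longrightarrow> eval_recf tf xs (f xs)"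
    and tg: "\<And>xs. length xs = k \<Longrightarrow> eval_recf tg xs (g xs)" unfolding rf_def by blast
  show ?thesis unfolding rf_def
    by (rule exI[of _ "Comp tf [tg]"]) (auto intro!: eval_recf.comp tf tg)
qed

lemma rf_comp2: "rf 2 f \<Longrightarrow> rf k g \<Longrightarrow> rf k h \<Longrightarrow> rf k (\<lambda>xs. f [g xs, h xs])"
proof -
  assume "rf 2 f" "rf k g" "rf k h"
  then obtain tf tg th where tf: "\<And>xs. length xs = 2 \<Longrightarrow> eval_recf tf xs (f xs)"
    and tg: "\<And>xs. length xs = k \<Longrightarrow> eval_recf tg xs (g xs)"
    and th: "\<And>xs. length xs = k \<Longrightarrow> eval_recf th xs (h xs)" unfolding rf_def by blast
  show ?thesis unfolding rf_def
    by (rule exI[of _ "Comp tf [tg, th]"]) (auto intro!: eval_recf.comp tf tg th)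
qed

lemma rf_suc: "rf k g \<Longrightarrow> rf k (\<lambda>xs. Suc (g xs))"
proof -
  have "rf 1 (\<lambda>xs. Suc (hd xs))" unfolding rf_def
    apply (rule exI[of _ Succ])
    apply clarify
    subgoal for xs by (cases xs) (auto intro: eval_recf.succ)
    done
  then show "rf k g \<Longrightarrow> ?thesis" using rf_comp1[of "\<lambda>xs. Suc (hd xs)"] by simp
qed

lemma rf_const: "rf k (\<lambda>_. c)"
  by (induction c) (auto intro: rf_zero rf_suc)

fun prec :: "(nat list \<Rightarrow> nat) \<Rightarrow> (nat list \<Rightarrow> nat) \<Rightarrow> nat \<Rightarrow> nat list \<Rightarrow> nat" where
  "prec f g 0 xs = f xs"
| "prec f g (Suc n) xs = g (prec f g n xs # n # xs)"

lemma rf_prim: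
  assumes "rf k f" "rf (Suc (Suc k)) g"
  shows "rf (Suc k) (\<lambda>xs. prec f g (hd xs) (tl xs))"
proof -
  obtain tf tg where tf: "\<And>xs. length xs = k \<Longrightarrow> eval_recf tf xs (f xs)"
    and tg: "\<And>xs. length xs = Suc (Suc k) \<Longrightarrow> eval_recf tg xs (g xs)"
    using assms unfolding rf_def by blast
  have *: "eval_recf (Prim tf tg) (n # xs) (prec f g n xs)" if "length xs = k" for n xs
    using that
  proof (induction n)
    case 0 then show ?case by (auto intro: eval_recf.prim0 tf)
  next
    case (Suc n)
    have "eval_recf tg (prec f g n xs # n # xs) (g (prec f g n xs # n # xs))"
      by (rule tg) (simp add: Suc.prems)
    then show ?case using eval_recf.primS[OF Suc.IH[OF Suc.prems]] by simp
  qed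
  show ?thesis unfolding rf_def
    apply (rule exI[of _ "Prim tf tg"])
    apply clarify
    subgoal for xs using * by (cases xs) auto
    done
qed

lemma rf_mn:
  assumes "rf (Suc k) f" "\<And>xs. length xs = k \<Longrightarrow> \<exists>n. f (n # xs) = 0"
  shows "rf k (\<lambda>xs. LEAST n. f (n # xs) = 0)"
proof -
  obtain tf where tf: "\<And>xs. length xs = Suc k \<Longrightarrow> eval_recf tf xs (f xs)"
    using assms unfolding rf_def by blast
  show ?thesis unfolding rf_def
  proof (rule exI[of _ "Mn tf"], intro allI impI)
    fix xs :: "nat list" assume l: "length xs = k"
    let ?n = "LEAST n. f (n # xs) = 0"
    have z: "f (?n # xs) = 0" using assms(2)[OF l] by (rule LeastI_ex)
    have nz: "f (m # xs) > 0" if "m < ?n" for m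
      using not_less_Least[OF that] by simp
    show "eval_recf (Mn tf) xs ?n"
    proof (rule eval_recf.mn)
      show "eval_recf tf (?n # xs) 0" using tf[of "?n # xs"] z l by simp
      show "\<forall>m<?n. \<exists>y>0. eval_recf tf (m # xs) y"
      proof (intro allI impI)
        fix m assume "m < ?n"
        then show "\<exists>y>0. eval_recf tf (m # xs) y" using tf[of "m # xs"] nz[of m] l by auto
      qed
    qed
  qed
qed

lemma rf_prim1:
  assumes "rf 0 f" "rf 2 g"
  shows "rf 1 (\<lambda>xs. prec f g (hd xs) (tl xs))"
  using rf_prim[of 0 f g] assms by (simp add: numeral_2_eq_2)

lemma rf_prim2:
  assumes "rf 1 f" "rf 3 g"
  shows "rf 2 (\<lambda>xs. prec f g (hd xs) (tl xs))"
  using rf_prim[of 1 f g] assms by (simp add: numeral_2_eq_2 numeral_3_eq_3)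

lemmas rf_prim' = rf_prim1 rf_prim2

lemma len1: "length xs = 1 \<Longrightarrow> xs = [xs!0]"
  by (cases xs) auto
lemma len2: "length xs = 2 \<Longrightarrow> xs = [xs!0, xs!1]"
  by (auto simp: numeral_2_eq_2 length_Suc_conv)

lemma rf_id1: "rf 1 (\<lambda>xs. xs!0)" by (rule rf_proj) simp

lemma rf_add2: "rf 2 (\<lambda>xs. xs!0 + xs!1)"
proof -
  have p: "prec (\<lambda>xs. xs!0) (\<lambda>ys. Suc (ys!0)) n [x] = n + x" for n x
    by (induction n) auto
  have "rf 2 (\<lambda>xs. prec (\<lambda>xs. xs!0) (\<lambda>ys. Suc (ys!0)) (hd xs) (tl xs))"
    by (rule rf_prim') (auto intro!: rf_suc rf_proj)
  then show ?thesis
    by (rule rf_cong) (use p in \<open>auto simp: length_Suc_conv numeral_2_eq_2\<close>)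
qed

lemma rf_add: "rf k g \<Longrightarrow> rf k h \<Longrightarrow> rf k (\<lambda>xs. g xs + h xs)"
  using rf_comp2[OF rf_add2] by simp

lemma rf_mult2: "rf 2 (\<lambda>xs. xs!0 * xs!1)"
proof -
  have p: "prec (\<lambda>xs. 0) (\<lambda>ys. ys!0 + ys!2) n [x] = n * x" for n x
    by (induction n) auto
  have "rf 2 (\<lambda>xs. prec (\<lambda>xs. 0) (\<lambda>ys. ys!0 + ys!2) (hd xs) (tl xs))"
    by (rule rf_prim') (auto intro!: rf_zero rf_add rf_proj)
  then show ?thesis
    by (rule rf_cong) (use p in \<open>auto simp: length_Suc_conv numeral_2_eq_2\<close>)
qed

lemma rf_mult: "rf k g \<Longrightarrow> rf k h \<Longrightarrow> rf k (\<lambda>xs. g xs * h xs)"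
  using rf_comp2[OF rf_mult2] by simp

lemma rf_pred1: "rf 1 (\<lambda>xs. xs!0 - 1)"
proof -
  have p: "prec (\<lambda>xs. 0) (\<lambda>ys. ys!1) n [] = n - 1" for n
    by (induction n) auto
  have "rf 1 (\<lambda>xs. prec (\<lambda>xs. 0) (\<lambda>ys. ys!1) (hd xs) (tl xs))"
    by (rule rf_prim') (auto intro!: rf_zero rf_proj)
  then show ?thesis
    by (rule rf_cong) (use p in \<open>auto simp: length_Suc_conv numeral_2_eq_2\<close>)
qed

lemma rf_sub2: "rf 2 (\<lambda>xs. xs!1 - xs!0)"
proof -
  have p: "prec (\<lambda>xs. xs!0) (\<lambda>ys. ys!0 - 1) n [x] = x - n" for n x
    by (induction n) auto
  have "rf 2 (\<lambda>xs. prec (\<lambda>xs. xs!0) (\<lambda>ys. ys!0 - 1) (hd xs) (tl xs))"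
    by (rule rf_prim') (use rf_comp1[OF rf_pred1 rf_proj[of 0 3]] in \<open>auto intro!: rf_proj\<close>)
  then show ?thesis
    by (rule rf_cong) (use p in \<open>auto simp: length_Suc_conv numeral_2_eq_2\<close>)
qed

lemma rf_sub: "rf k g \<Longrightarrow> rf k h \<Longrightarrow> rf k (\<lambda>xs. g xs - h xs)"
  using rf_comp2[OF rf_sub2, of k h g] by simp

lemma rf_tri1: "rf 1 (\<lambda>xs. triangle (xs!0))"
proof -
  have p: "prec (\<lambda>xs. 0) (\<lambda>ys. ys!0 + Suc (ys!1)) n [] = triangle n" for n
    by (induction n) auto
  have "rf 1 (\<lambda>xs. prec (\<lambda>xs. 0) (\<lambda>ys. ys!0 + Suc (ys!1)) (hd xs) (tl xs))"
    by (rule rf_prim') (auto intro!: rf_zero rf_add rf_suc rf_proj)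
  then show ?thesis
    by (rule rf_cong) (use p in \<open>auto simp: length_Suc_conv numeral_2_eq_2\<close>)
qed

lemma rf_tri: "rf k g \<Longrightarrow> rf k (\<lambda>xs. triangle (g xs))"
  using rf_comp1[OF rf_tri1] by simp

lemma rf_mod2_1: "rf 1 (\<lambda>xs. xs!0 mod 2)"
proof -
  have p: "prec (\<lambda>xs. 0) (\<lambda>ys. 1 - ys!0) n [] = n mod 2" for n
    by (induction n) (auto simp: mod_Suc)
  have "rf 1 (\<lambda>xs. prec (\<lambda>xs. 0) (\<lambda>ys. 1 - ys!0) (hd xs) (tl xs))"
    by (rule rf_prim') (auto intro!: rf_zero rf_sub rf_const rf_proj)
  then show ?thesis
    by (rule rf_cong) (use p in \<open>auto simp: length_Suc_conv numeral_2_eq_2\<close>)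
qed

lemma rf_mod2: "rf k g \<Longrightarrow> rf k (\<lambda>xs. g xs mod 2)"
  using rf_comp1[OF rf_mod2_1] by simp

lemma rf_div2_1: "rf 1 (\<lambda>xs. xs!0 div 2)"
proof -
  have p: "prec (\<lambda>xs. 0) (\<lambda>ys. ys!0 + ys!1 mod 2) n [] = n div 2" for n
    by (induction n) (auto simp: div2_Suc_Suc, presburger)
  have "rf 1 (\<lambda>xs. prec (\<lambda>xs. 0) (\<lambda>ys. ys!0 + ys!1 mod 2) (hd xs) (tl xs))"
    by (rule rf_prim') (auto intro!: rf_zero rf_add rf_mod2 rf_proj)
  then show ?thesis
    by (rule rf_cong) (use p in \<open>auto simp: length_Suc_conv numeral_2_eq_2\<close>)
qed

lemma rf_div2: "rf k g \<Longrightarrow> rf k (\<lambda>xs. g xs div 2)"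
  using rf_comp1[OF rf_div2_1] by simp

lemma rf_lt: "rf k g \<Longrightarrow> rf k h \<Longrightarrow> rf k (\<lambda>xs. of_bool (g xs < h xs))"
proof -
  assume "rf k g" "rf k h"
  then have "rf k (\<lambda>xs. 1 - (1 - (h xs - g xs)))" by (intro rf_sub rf_const)
  then show ?thesis by (rule rf_cong) auto
qed

definition sdec :: "nat \<Rightarrow> nat" where
  "sdec m = (LEAST s. m < triangle (Suc s))"

lemma sdec_props: "triangle (sdec m) \<le> m" "m < triangle (Suc (sdec m))"
proof -
  have ex: "\<exists>s. m < triangle (Suc s)" by (rule exI[of _ m]) simp
  show 2: "m < triangle (Suc (sdec m))" unfolding sdec_def by (rule LeastI_ex[OF ex])
  show "triangle (sdec m) \<le> m"
  proof (cases "sdec m")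
    case 0 then show ?thesis by simp
  next
    case (Suc s)
    then have "s < sdec m" by simp
    then have "\<not> m < triangle (Suc s)" unfolding sdec_def by (rule not_less_Least)
    then show ?thesis using Suc by simp
  qed
qed

lemma prod_decode_sdec: "prod_decode m = (m - triangle (sdec m), sdec m - (m - triangle (sdec m)))"
proof -
  let ?s = "sdec m"
  have a: "triangle ?s \<le> m" "m < triangle ?s + Suc ?s" using sdec_props[of m] by auto
  have "prod_encode (m - triangle ?s, ?s - (m - triangle ?s)) = m"
    using a unfolding prod_encode_def by auto
  then show ?thesis by (metis prod_encode_inverse)
qed

lemma rf_sdec1: "rf 1 (\<lambda>xs. sdec (xs!0))"
proof -
  define F where "F = (\<lambda>ys. 1 - (triangle (Suc (ys!0)) - ys!(1::nat)))"
  have "rf 2 F" unfolding F_def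
    by (intro rf_sub rf_const rf_tri rf_suc rf_proj) auto
  then have h: "rf (Suc 1) F" by (simp add: numeral_2_eq_2)
  have e: "\<exists>n. F (n # xs) = 0" if "length xs = 1" for xs
    by (rule exI[of _ "xs ! 0"]) (simp add: F_def)
  have "rf 1 (\<lambda>xs. LEAST n. F (n # xs) = 0)" by (rule rf_mn[OF h e])
  then show ?thesis
    by (rule rf_cong) (simp add: sdec_def Suc_le_eq F_def)
qed

lemma rf_sdec: "rf k g \<Longrightarrow> rf k (\<lambda>xs. sdec (g xs))"
  using rf_comp1[OF rf_sdec1] by simp

lemma rf_fst_pd: "rf k g \<Longrightarrow> rf k (\<lambda>xs. fst (prod_decode (g xs)))"
  unfolding prod_decode_sdec by (simp add: rf_sub rf_tri rf_sdec)

lemma rf_snd_pd: "rf k g \<Longrightarrow> rf k (\<lambda>xs. snd (prod_decode (g xs)))"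
  unfolding prod_decode_sdec by (simp add: rf_sub rf_tri rf_sdec)

lemma int_decode_even: "even a \<Longrightarrow> int_decode a = int (a div 2)"
  by (simp add: int_decode_def sum_decode_def)
lemma int_decode_odd: "odd a \<Longrightarrow> int_decode a < 0"
  by (simp add: int_decode_def sum_decode_def)

lemma rat_decode_real: "real_of_rat (rat_decode m) =
   real_of_int (int_decode (fst (prod_decode m))) / real (Suc (snd (prod_decode m)))"
  unfolding rat_decode_def by (simp add: case_prod_beta of_rat_divide of_rat_add)

lemma frac_less_eq_iff_aux:
  fixes x y z w :: real
  assumes "y > 0" "w > 0"
  shows "x / y < z / w \<longleftrightarrow> x * w < z * y"
  using assms by (simp add: field_simps)

lemma rat_less_iff:
  assumes "0 < q"
  shows "(real_of_rat (rat_decode m) < real p / real q) \<longleftrightarrow>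
    (fst (prod_decode m) mod 2 = 1 \<or> (fst (prod_decode m) div 2) * q < p * Suc (snd (prod_decode m)))"
proof (cases "even (fst (prod_decode m))")
  case True
  let ?A = "fst (prod_decode m) div 2" and ?B = "snd (prod_decode m)"
  have e: "real_of_rat (rat_decode m) = real ?A / real (Suc ?B)"
    by (simp add: rat_decode_real int_decode_even[OF True] del: of_nat_Suc)
  have "(real ?A / real (Suc ?B) < real p / real q) \<longleftrightarrow> real ?A * real q < real p * real (Suc ?B)"
    using assms by (simp add: frac_less_eq_iff_aux del: of_nat_Suc)
  also have "\<dots> \<longleftrightarrow> ?A * q < p * Suc ?B" by (metis of_nat_less_iff of_nat_mult)
  finally show ?thesis using True e by (simp add: even_iff_mod_2_eq_zero del: of_nat_Suc)
next
  case False
  have "real_of_int (int_decode (fst (prod_decode m))) < 0" using int_decode_odd[OF False] by simp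
  then have "real_of_rat (rat_decode m) < 0" unfolding rat_decode_real
    by (simp add: divide_neg_pos)
  moreover have "0 \<le> real p / real q" by simp
  ultimately have "real_of_rat (rat_decode m) < real p / real q" by linarith
  then show ?thesis using False by (simp add: odd_iff_mod_2_eq_one)
qed

lemma rat_greater_iff:
  assumes "0 < q"
  shows "(real p / real q < real_of_rat (rat_decode m)) \<longleftrightarrow>
    (fst (prod_decode m) mod 2 = 0 \<and> p * Suc (snd (prod_decode m)) < (fst (prod_decode m) div 2) * q)"
proof (cases "even (fst (prod_decode m))")
  case True
  let ?A = "fst (prod_decode m) div 2" and ?B = "snd (prod_decode m)"
  have e: "real_of_rat (rat_decode m) = real ?A / real (Suc ?B)"
    by (simp add: rat_decode_real int_decode_even[OF True] del: of_nat_Suc)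
  have "(real p / real q < real ?A / real (Suc ?B)) \<longleftrightarrow> real p * real (Suc ?B) < real ?A * real q"
    using assms by (simp add: frac_less_eq_iff_aux del: of_nat_Suc)
  also have "\<dots> \<longleftrightarrow> p * Suc ?B < ?A * q" by (metis of_nat_less_iff of_nat_mult)
  finally show ?thesis using True e by (simp add: even_iff_mod_2_eq_zero del: of_nat_Suc)
next
  case False
  have "real_of_int (int_decode (fst (prod_decode m))) < 0" using int_decode_odd[OF False] by simp
  then have "real_of_rat (rat_decode m) < 0" unfolding rat_decode_real
    by (simp add: divide_neg_pos)
  moreover have "0 \<le> real p / real q" by simp
  ultimately have "\<not> real p / real q < real_of_rat (rat_decode m)" by linarith
  then show ?thesis using False by (simp add: odd_iff_mod_2_eq_one)
qed

lemma ob_or: "(a::nat) mod 2 + (1 - a mod 2) * of_bool X = of_bool (a mod 2 = 1 \<or> X)"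
  by (cases "even a") (auto simp: odd_iff_mod_2_eq_one)
lemma ob_and: "(1 - (a::nat) mod 2) * of_bool X = of_bool (a mod 2 = 0 \<and> X)"
  by (cases "even a") (auto simp: odd_iff_mod_2_eq_one)

lemma rf_ratless:
  assumes "0 < q" "rf k G"
  shows "rf k (\<lambda>xs. of_bool (real_of_rat (rat_decode (G xs)) < real p / real q))"
proof -
  have "rf k (\<lambda>xs. fst (prod_decode (G xs)) mod 2 + (1 - fst (prod_decode (G xs)) mod 2) *
      of_bool ((fst (prod_decode (G xs)) div 2) * q < p * Suc (snd (prod_decode (G xs)))))"
    by (intro rf_add rf_mult rf_sub rf_lt rf_mod2 rf_div2 rf_fst_pd rf_snd_pd rf_suc rf_const assms)
  then show ?thesis
    by (rule rf_cong) (simp only: rat_less_iff[OF assms(1)] ob_or)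
qed

lemma rf_ratgreater:
  assumes "0 < q" "rf k G"
  shows "rf k (\<lambda>xs. of_bool (real p / real q < real_of_rat (rat_decode (G xs))))"
proof -
  have "rf k (\<lambda>xs. (1 - fst (prod_decode (G xs)) mod 2) *
      of_bool (p * Suc (snd (prod_decode (G xs))) < (fst (prod_decode (G xs)) div 2) * q))"
    by (intro rf_mult rf_sub rf_lt rf_mod2 rf_div2 rf_fst_pd rf_snd_pd rf_suc rf_const assms)
  then show ?thesis
    by (rule rf_cong) (simp only: rat_greater_iff[OF assms(1)] ob_and)
qed

lemma rf_of_recursive_fun: "recursive_fun g \<Longrightarrow> rf 1 (\<lambda>xs. g (xs!0))"
  unfolding recursive_fun_def rf_def by (metis len1)

lemma recursive_fun_of_rf: "rf 1 H \<Longrightarrow> recursive_fun (\<lambda>n. H [n])"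
proof -
  assume "rf 1 H"
  then obtain t where t: "\<And>xs. length xs = 1 \<Longrightarrow> eval_recf t xs (H xs)" unfolding rf_def by blast
  show ?thesis unfolding recursive_fun_def by (rule exI[of _ t]) (auto intro: t)
qed

lemma rf_g_pe: "recursive_fun g \<Longrightarrow> rf 1 (\<lambda>xs. g (prod_encode (xs!0, N)))"
proof -
  assume g: "recursive_fun g"
  have "rf 1 (\<lambda>xs. triangle (xs!0 + N) + xs!0)"
    by (intro rf_add rf_tri rf_proj rf_const) auto
  from rf_comp1[OF rf_of_recursive_fun[OF g] this] show ?thesis
    by (simp add: prod_encode_def)
qed

lemma sel_less:
  assumes "recursive_fun g" "0 < q"
  shows "recursive_selection (\<lambda>s. real_of_rat (rat_decode (g (prod_encode (sit_encode s, N)))) < real p / real q)"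
proof -
  have "recursive_fun (\<lambda>n. of_bool (real_of_rat (rat_decode (g (prod_encode (n, N)))) < real p / real q))"
    using recursive_fun_of_rf[OF rf_ratless[OF assms(2) rf_g_pe[OF assms(1)]]] by simp
  then show ?thesis unfolding recursive_selection_def by (intro exI[of _ "\<lambda>n. of_bool (real_of_rat (rat_decode (g (prod_encode (n, N)))) < real p / real q)"]) auto
qed

lemma sel_greater:
  assumes "recursive_fun g" "0 < q"
  shows "recursive_selection (\<lambda>s. real p / real q < real_of_rat (rat_decode (g (prod_encode (sit_encode s, N)))))"
proof -
  have "recursive_fun (\<lambda>n. of_bool (real p / real q < real_of_rat (rat_decode (g (prod_encode (n, N))))))"
    using recursive_fun_of_rf[OF rf_ratgreater[OF assms(2) rf_g_pe[OF assms(1)]]] by simp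
  then show ?thesis unfolding recursive_selection_def by (intro exI[of _ "\<lambda>n. of_bool (real p / real q < real_of_rat (rat_decode (g (prod_encode (n, N)))))"]) auto
qed



lemma count_to_top:
  assumes "\<And>n. \<exists>k\<ge>n. S k"
  shows "filterlim (\<lambda>n. \<Sum>k<n. of_bool (S k) :: real) at_top sequentially"
proof -
  let ?T = "\<lambda>n. \<Sum>k<n. of_bool (S k) :: real"
  have mono: "?T n \<le> ?T n'" if "n \<le> n'" for n n'
    by (rule sum_mono2) (use that in auto)
  have "\<exists>N. \<forall>n\<ge>N. real m \<le> ?T n" for m
  proof (induction m)
    case 0 then show ?case by (auto intro: sum_nonneg)
  next
    case (Suc m)
    then obtain N where N: "\<And>n. n \<ge> N \<Longrightarrow> real m \<le> ?T n" by blast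
    obtain k where k: "k \<ge> N" "S k" using assms by blast
    have "real (Suc m) \<le> ?T (Suc k)" using N[OF k(1)] k(2) by simp
    then have "\<forall>n\<ge>Suc k. real (Suc m) \<le> ?T n" using mono by (meson order_trans)
    then show ?case by blast
  qed
  then have "\<forall>m. eventually (\<lambda>n. real m \<le> ?T n) sequentially"
    by (simp add: eventually_sequentially)
  then show ?thesis unfolding filterlim_at_top
  proof (intro allI)
    fix Z :: real
    assume h: "\<forall>m. eventually (\<lambda>n. real m \<le> ?T n) sequentially"
    obtain m :: nat where "Z \<le> real m" using real_arch_simple by blast
    then show "eventually (\<lambda>n. Z \<le> ?T n) sequentially"
      using h[rule_format, of m] by (auto elim: eventually_mono)
  qed
qed

lemma contra_low:
  fixes S :: "nat \<Rightarrow> bool" and w f :: "nat \<Rightarrow> real"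
  assumes T: "filterlim (\<lambda>n. \<Sum>k<n. of_bool (S k) :: real) at_top sequentially"
    and sel: "\<And>k. S k \<Longrightarrow> f k \<le> u"
    and h1: "Limsup sequentially (\<lambda>n. ereal ((\<Sum>k<n. of_bool (S k) * (w k - f k)) / (\<Sum>k<n. of_bool (S k)))) \<le> 0"
    and h2: "Liminf sequentially (\<lambda>n. ereal ((\<Sum>k<n. of_bool (S k) * (w k - a)) / (\<Sum>k<n. of_bool (S k)))) \<ge> 0"
  shows "a \<le> u"
proof (rule ccontr)
  assume "\<not> a \<le> u"
  define d where "d = (a - u) / 3"
  have d: "d > 0" using \<open>\<not> a \<le> u\<close> by (simp add: d_def)
  let ?T = "\<lambda>n. \<Sum>k<n. of_bool (S k) :: real"
  let ?A = "\<lambda>n. \<Sum>k<n. of_bool (S k) * w k"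
  let ?F = "\<lambda>n. \<Sum>k<n. of_bool (S k) * f k"
  have e1: "eventually (\<lambda>n. ereal ((\<Sum>k<n. of_bool (S k) * (w k - f k)) / ?T n) < ereal d) sequentially"
    by (rule Limsup_lessD, rule le_less_trans[OF h1]) (use d in simp)
  have e2: "eventually (\<lambda>n. ereal (-d) < ereal ((\<Sum>k<n. of_bool (S k) * (w k - a)) / ?T n)) sequentially"
    by (rule less_LiminfD, rule less_le_trans[OF _ h2]) (use d in simp)
  have e3: "eventually (\<lambda>n. 1 \<le> ?T n) sequentially"
    using T unfolding filterlim_at_top by blast
  obtain n where n1: "(\<Sum>k<n. of_bool (S k) * (w k - f k)) / ?T n < d"
    and n2: "-d < (\<Sum>k<n. of_bool (S k) * (w k - a)) / ?T n" and n3: "1 \<le> ?T n"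
    using eventually_happens[OF eventually_conj[OF e1 eventually_conj[OF e2 e3]]] by auto
  have s1: "(\<Sum>k<n. of_bool (S k) * (w k - f k)) = ?A n - ?F n"
    by (simp add: algebra_simps sum_subtractf)
  have s2: "(\<Sum>k<n. of_bool (S k) * (w k - a)) = ?A n - a * ?T n"
    by (simp add: algebra_simps sum_subtractf sum_distrib_left)
  have s3: "?F n \<le> u * ?T n"
    unfolding sum_distrib_left by (rule sum_mono) (use sel in auto)
  have tpos: "?T n > 0" using n3 by simp
  have "?A n - ?F n < d * ?T n" using n1 tpos unfolding s1 by (simp add: divide_less_eq)
  moreover have "-d * ?T n < ?A n - a * ?T n" using n2 tpos unfolding s2 by (simp add: less_divide_eq)
  ultimately have "a * ?T n < (u + 2 * d) * ?T n" using s3 by (simp add: algebra_simps)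
  then have "a < u + 2 * d" using tpos by simp
  moreover have "3 * d = a - u" by (simp add: d_def)
  ultimately show False using d by linarith
qed

lemma contra_high:
  fixes S :: "nat \<Rightarrow> bool" and w f :: "nat \<Rightarrow> real"
  assumes T: "filterlim (\<lambda>n. \<Sum>k<n. of_bool (S k) :: real) at_top sequentially"
    and sel: "\<And>k. S k \<Longrightarrow> u \<le> f k"
    and h1: "Liminf sequentially (\<lambda>n. ereal ((\<Sum>k<n. of_bool (S k) * (w k - f k)) / (\<Sum>k<n. of_bool (S k)))) \<ge> 0"
    and h2: "Limsup sequentially (\<lambda>n. ereal ((\<Sum>k<n. of_bool (S k) * (w k - b)) / (\<Sum>k<n. of_bool (S k)))) \<le> 0"
  shows "u \<le> b"
proof (rule ccontr)
  assume "\<not> u \<le> b"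
  define d where "d = (u - b) / 3"
  have d: "d > 0" using \<open>\<not> u \<le> b\<close> by (simp add: d_def)
  let ?T = "\<lambda>n. \<Sum>k<n. of_bool (S k) :: real"
  let ?A = "\<lambda>n. \<Sum>k<n. of_bool (S k) * w k"
  let ?F = "\<lambda>n. \<Sum>k<n. of_bool (S k) * f k"
  have e1: "eventually (\<lambda>n. ereal ((\<Sum>k<n. of_bool (S k) * (w k - b)) / ?T n) < ereal d) sequentially"
    by (rule Limsup_lessD, rule le_less_trans[OF h2]) (use d in simp)
  have e2: "eventually (\<lambda>n. ereal (-d) < ereal ((\<Sum>k<n. of_bool (S k) * (w k - f k)) / ?T n)) sequentially"
    by (rule less_LiminfD, rule less_le_trans[OF _ h1]) (use d in simp)
  have e3: "eventually (\<lambda>n. 1 \<le> ?T n) sequentially"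
    using T unfolding filterlim_at_top by blast
  obtain n where n1: "(\<Sum>k<n. of_bool (S k) * (w k - b)) / ?T n < d"
    and n2: "-d < (\<Sum>k<n. of_bool (S k) * (w k - f k)) / ?T n" and n3: "1 \<le> ?T n"
    using eventually_happens[OF eventually_conj[OF e1 eventually_conj[OF e2 e3]]] by auto
  have s1: "(\<Sum>k<n. of_bool (S k) * (w k - f k)) = ?A n - ?F n"
    by (simp add: algebra_simps sum_subtractf)
  have s2: "(\<Sum>k<n. of_bool (S k) * (w k - b)) = ?A n - b * ?T n"
    by (simp add: algebra_simps sum_subtractf sum_distrib_left)
  have s3: "u * ?T n \<le> ?F n"
    unfolding sum_distrib_left by (rule sum_mono) (use sel in auto)
  have tpos: "?T n > 0" using n3 by simp
  have "?A n - b * ?T n < d * ?T n" using n1 tpos unfolding s2 by (simp add: divide_less_eq)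
  moreover have "-d * ?T n < ?A n - ?F n" using n2 tpos unfolding s1 by (simp add: less_divide_eq)
  ultimately have "(u - 2 * d) * ?T n < b * ?T n" using s3 by (simp add: algebra_simps)
  then have "u - 2 * d < b" using tpos by simp
  moreover have "3 * d = u - b" by (simp add: d_def)
  ultimately show False using d by linarith
qed



lemma interval_bounds:
  assumes "I \<in> intervals"
  obtains a b where "0 \<le> a" "a \<le> b" "b \<le> 1" "I = {a..b}" "Inf I = a" "Sup I = b"
  using assms unfolding intervals_def by auto

theorem proposition16:
  fixes \<phi> :: "bool list \<Rightarrow> real set" and \<omega> :: "nat \<Rightarrow> bool"
  assumes "forecasting_system \<phi>" and "precise \<phi>" and "computable_fs \<phi>"
    and "CH_random \<phi> \<omega>"
  shows "{x. Liminf sequentially (\<lambda>n. ereal (lower \<phi> (prefix \<omega> n))) \<le> ereal x \<and>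
             ereal x \<le> Limsup sequentially (\<lambda>n. ereal (lower \<phi> (prefix \<omega> n)))}
         \<subseteq> I_CH \<omega>"
proof
  fix x assume x: "x \<in> {x. Liminf sequentially (\<lambda>n. ereal (lower \<phi> (prefix \<omega> n))) \<le> ereal x \<and>
             ereal x \<le> Limsup sequentially (\<lambda>n. ereal (lower \<phi> (prefix \<omega> n)))}"
  have f01: "0 \<le> lower \<phi> s \<and> lower \<phi> s \<le> 1" for s
  proof -
    have "\<phi> s \<in> intervals" using assms(1) unfolding forecasting_system_def by blast
    then obtain a b where "0 \<le> a" "a \<le> b" "b \<le> 1" "Inf (\<phi> s) = a" by (rule interval_bounds)
    then show ?thesis unfolding lower_def by simp
  qed
  obtain ql qu where ql: "recursive_rat_fun ql"
    and approx: "\<And>s n. \<bar>lower \<phi> s - of_rat (ql s n)\<bar> < 1 / 2 ^ n"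
    using assms(3) unfolding computable_fs_def by blast
  obtain g where g: "recursive_fun g"
    and qlg: "\<And>s n. ql s n = rat_decode (g (prod_encode (sit_encode s, n)))"
    using ql unfolding recursive_rat_fun_def by blast
  have upeq: "upper \<phi> s = lower \<phi> s" for s using assms(2) unfolding precise_def by simp
  have CHphi: "CH_random \<phi> \<omega>" by fact
  show "x \<in> I_CH \<omega>" unfolding I_CH_def
  proof (rule InterI)
    fix I assume "I \<in> {I \<in> intervals. CH_random (\<lambda>_. I) \<omega>}"
    then have Iint: "I \<in> intervals" and CHI: "CH_random (\<lambda>_. I) \<omega>" by auto
    obtain a b where ab: "0 \<le> a" "a \<le> b" "b \<le> 1" "I = {a..b}" "Inf I = a" "Sup I = b"
      using Iint by (rule interval_bounds)
    have la: "lower (\<lambda>_. I) s = a" for s using ab unfolding lower_def by simp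
    have ub: "upper (\<lambda>_. I) s = b" for s using ab unfolding upper_def by simp
    have exN: "\<exists>N. 1 / 2 ^ N < d" if "d > 0" for d :: real
    proof -
      obtain N where "1 / d < 2 ^ N" using real_arch_pow[of 2 "1/d"] by auto
      then have "1 / 2 ^ N < d" using that by (simp add: divide_less_eq field_simps)
      then show ?thesis by blast
    qed
    have low: "ereal a \<le> Liminf sequentially (\<lambda>n. ereal (lower \<phi> (prefix \<omega> n)))"
    proof (rule ccontr)
      assume "\<not> ?thesis"
      then have lt: "Liminf sequentially (\<lambda>n. ereal (lower \<phi> (prefix \<omega> n))) < ereal a" by simp
      have L0: "0 \<le> Liminf sequentially (\<lambda>n. ereal (lower \<phi> (prefix \<omega> n)))"
        by (rule Liminf_bounded) (use f01 in simp)
      obtain c where c1: "Liminf sequentially (\<lambda>n. ereal (lower \<phi> (prefix \<omega> n))) < ereal c"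
        and c2: "ereal c < ereal a" using ereal_dense2[OF lt] by blast
      have c0: "0 < c" using le_less_trans[OF L0 c1] by simp
      have ca: "c < a" using c2 by simp
      obtain N where N: "1 / 2 ^ N < (a - c) / 3" using exN[of "(a - c) / 3"] ca by auto
      define e :: real where "e = 1 / 2 ^ N"
      have e0: "e > 0" by (simp add: e_def)
      obtain r where rQ: "r \<in> \<rat>" and r1: "c + e < r" and r2: "r < a - 2 * e"
        using Rats_dense_in_real[of "c + e" "a - 2 * e"] N by (auto simp: e_def)
      obtain p q :: nat where q0: "q \<noteq> 0" and rpq: "\<bar>r\<bar> = real p / real q"
        using Rats_abs_nat_div_natE[OF rQ] by metis
      have rpq': "r = real p / real q" using rpq r1 c0 e0 by simp
      define S where "S = (\<lambda>s. real_of_rat (rat_decode (g (prod_encode (sit_encode s, N)))) < real p / real q)"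
      have recS: "recursive_selection S" unfolding S_def by (rule sel_less[OF g]) (use q0 in simp)
      have Sql: "S s \<longleftrightarrow> real_of_rat (ql s N) < r" for s by (simp add: S_def qlg rpq')
      have app: "\<bar>lower \<phi> s - real_of_rat (ql s N)\<bar> < e" for s using approx[of s N] by (simp add: e_def)
      have freq: "\<exists>k\<ge>n. lower \<phi> (prefix \<omega> k) < c" for n
      proof (rule ccontr)
        assume "\<not> ?thesis"
        then have "eventually (\<lambda>k. ereal c \<le> ereal (lower \<phi> (prefix \<omega> k))) sequentially"
          unfolding eventually_sequentially by (auto simp: not_less)
        then have "ereal c \<le> Liminf sequentially (\<lambda>n. ereal (lower \<phi> (prefix \<omega> n)))"
          by (rule Liminf_bounded)
        then show False using c1 by simp
      qed
      have inf: "\<exists>k\<ge>n. S (prefix \<omega> k)" for n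
      proof -
        obtain k where k: "k \<ge> n" "lower \<phi> (prefix \<omega> k) < c" using freq by blast
        have "S (prefix \<omega> k)" unfolding Sql using app[of "prefix \<omega> k"] k r1 by linarith
        then show ?thesis using k by blast
      qed
      have T: "filterlim (\<lambda>n. \<Sum>k<n. of_bool (S (prefix \<omega> k)) :: real) at_top sequentially"
        by (rule count_to_top) (use inf in blast)
      have h1: "Limsup sequentially (\<lambda>n. ereal
          ((\<Sum>k<n. of_bool (S (prefix \<omega> k)) * (of_bool (\<omega> k) - lower \<phi> (prefix \<omega> k)))
           / (\<Sum>k<n. of_bool (S (prefix \<omega> k))))) \<le> 0"
        using CHphi recS T unfolding CH_random_def upeq by blast
      have h2: "Liminf sequentially (\<lambda>n. ereal
          ((\<Sum>k<n. of_bool (S (prefix \<omega> k)) * (of_bool (\<omega> k) - a))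
           / (\<Sum>k<n. of_bool (S (prefix \<omega> k))))) \<ge> 0"
        using CHI recS T unfolding CH_random_def la by blast
      have sel: "lower \<phi> (prefix \<omega> k) \<le> r + e" if "S (prefix \<omega> k)" for k
        using that app[of "prefix \<omega> k"] unfolding Sql by linarith
      have "a \<le> r + e"
        by (rule contra_low[where S="\<lambda>k. S (prefix \<omega> k)" and w="\<lambda>k. of_bool (\<omega> k)"
              and f="\<lambda>k. lower \<phi> (prefix \<omega> k)", OF T sel h1 h2])
      then show False using r2 e0 by linarith
    qed
    have high: "Limsup sequentially (\<lambda>n. ereal (lower \<phi> (prefix \<omega> n))) \<le> ereal b"
    proof (rule ccontr)
      assume "\<not> ?thesis"
      then have lt: "ereal b < Limsup sequentially (\<lambda>n. ereal (lower \<phi> (prefix \<omega> n)))" by simp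
      obtain c where c1: "ereal c < Limsup sequentially (\<lambda>n. ereal (lower \<phi> (prefix \<omega> n)))"
        and c2: "ereal b < ereal c" using ereal_dense2[OF lt] by blast
      have cb: "b < c" using c2 by simp
      obtain N where N: "1 / 2 ^ N < (c - b) / 3" using exN[of "(c - b) / 3"] cb by auto
      define e :: real where "e = 1 / 2 ^ N"
      have e0: "e > 0" by (simp add: e_def)
      obtain r where rQ: "r \<in> \<rat>" and r1: "b + 2 * e < r" and r2: "r < c - e"
        using Rats_dense_in_real[of "b + 2 * e" "c - e"] N by (auto simp: e_def)
      obtain p q :: nat where q0: "q \<noteq> 0" and rpq: "\<bar>r\<bar> = real p / real q"
        using Rats_abs_nat_div_natE[OF rQ] by metis
      have "0 < r" using r1 ab(1,2) e0 by linarith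
      then have rpq': "r = real p / real q" using rpq by simp
      define S where "S = (\<lambda>s. real p / real q < real_of_rat (rat_decode (g (prod_encode (sit_encode s, N)))))"
      have recS: "recursive_selection S" unfolding S_def by (rule sel_greater[OF g]) (use q0 in simp)
      have Sql: "S s \<longleftrightarrow> r < real_of_rat (ql s N)" for s by (simp add: S_def qlg rpq')
      have app: "\<bar>lower \<phi> s - real_of_rat (ql s N)\<bar> < e" for s using approx[of s N] by (simp add: e_def)
      have freq: "\<exists>k\<ge>n. c < lower \<phi> (prefix \<omega> k)" for n
      proof (rule ccontr)
        assume "\<not> ?thesis"
        then have "eventually (\<lambda>k. ereal (lower \<phi> (prefix \<omega> k)) \<le> ereal c) sequentially"
          unfolding eventually_sequentially by (auto simp: not_less)
        then have "Limsup sequentially (\<lambda>n. ereal (lower \<phi> (prefix \<omega> n))) \<le> ereal c"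
          by (rule Limsup_bounded)
        then show False using c1 by simp
      qed
      have inf: "\<exists>k\<ge>n. S (prefix \<omega> k)" for n
      proof -
        obtain k where k: "k \<ge> n" "c < lower \<phi> (prefix \<omega> k)" using freq by blast
        have "S (prefix \<omega> k)" unfolding Sql using app[of "prefix \<omega> k"] k r2 by linarith
        then show ?thesis using k by blast
      qed
      have T: "filterlim (\<lambda>n. \<Sum>k<n. of_bool (S (prefix \<omega> k)) :: real) at_top sequentially"
        by (rule count_to_top) (use inf in blast)
      have h1: "Liminf sequentially (\<lambda>n. ereal
          ((\<Sum>k<n. of_bool (S (prefix \<omega> k)) * (of_bool (\<omega> k) - lower \<phi> (prefix \<omega> k)))
           / (\<Sum>k<n. of_bool (S (prefix \<omega> k))))) \<ge> 0"
        using CHphi recS T unfolding CH_random_def by blast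
      have h2: "Limsup sequentially (\<lambda>n. ereal
          ((\<Sum>k<n. of_bool (S (prefix \<omega> k)) * (of_bool (\<omega> k) - b))
           / (\<Sum>k<n. of_bool (S (prefix \<omega> k))))) \<le> 0"
        using CHI recS T unfolding CH_random_def ub by blast
      have sel: "r - e \<le> lower \<phi> (prefix \<omega> k)" if "S (prefix \<omega> k)" for k
        using that app[of "prefix \<omega> k"] unfolding Sql by linarith
      have "r - e \<le> b"
        by (rule contra_high[where S="\<lambda>k. S (prefix \<omega> k)" and w="\<lambda>k. of_bool (\<omega> k)"
              and f="\<lambda>k. lower \<phi> (prefix \<omega> k)", OF T sel h1 h2])
      then show False using r1 e0 by linarith
    qed
    have x1: "Liminf sequentially (\<lambda>n. ereal (lower \<phi> (prefix \<omega> n))) \<le> ereal x"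
      and x2: "ereal x \<le> Limsup sequentially (\<lambda>n. ereal (lower \<phi> (prefix \<omega> n)))"
      using x by simp_all
    have "ereal a \<le> ereal x" using order_trans[OF low x1] .
    moreover have "ereal x \<le> ereal b" using order_trans[OF x2 high] .
    ultimately have "a \<le> x" "x \<le> b" by simp_all
    then show "x \<in> I" using ab(4) by simp
  qed
qed


end
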